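(* Let $K$ be a number field and let $\mathcal{R}_K$ be a system of representatives of the ideal class group of $K$ such that each $\mathfrak{g}\in\mathcal{R}_K$ is an integral ideal of $\mathcal{O}_K$ whose absolute norm is minimal among the integral ideals in its ideal class. Then every element of $\mathcal{R}_K$ is inseverable.
   Context: A nonzero ideal $\mathfrak{a}\subseteq\mathcal{O}_K$ is inseverable if the only principal ideal dividing (containing) $\mathfrak{a}$ is $\mathcal{O}_K$. *)

theory Defs
  imports "HOL-Computational_Algebra.Polynomial"
begin

text \<open>A number field is modelled as a subfield K of the complex numbers
  that is finite-dimensional over the rationals (every subfield of C contains Q).\<close>

definition subfield_of_complex :: "complex set \<Rightarrow> bool" where
  "subfield_of_complex K \<longleftrightarrow> 0 \<in> K \<and> 1 \<in> K \<and>
     (\<forall>x\<in>K. \<forall>y\<in>K. x + y \<in> K \<and> x - y \<in> K \<and> x * y \<in> K) \<and>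
     (\<forall>x\<in>K. x \<noteq> 0 \<longrightarrow> inverse x \<in> K)"

definition number_field :: "complex set \<Rightarrow> bool" where
  "number_field K \<longleftrightarrow> subfield_of_complex K \<and>
     (\<exists>bs :: complex list. set bs \<subseteq> K \<and>
        K \<subseteq> {(\<Sum>i<length bs. of_rat (q i) * bs ! i) | q. True})"

definition algebraic_integer :: "complex \<Rightarrow> bool" where
  "algebraic_integer x \<longleftrightarrow>
     (\<exists>p :: int poly. lead_coeff p = 1 \<and> poly (map_poly of_int p) x = 0)"

definition ring_of_integers :: "complex set \<Rightarrow> complex set" where
  "ring_of_integers K = {x \<in> K. algebraic_integer x}"

definition nonzero_integral_ideal :: "complex set \<Rightarrow> complex set \<Rightarrow> bool" where
  "nonzero_integral_ideal K I \<longleftrightarrow> I \<subseteq> ring_of_integers K \<and> 0 \<in> I \<and> I \<noteq> {0} \<and>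
     (\<forall>x\<in>I. \<forall>y\<in>I. x + y \<in> I) \<and>
     (\<forall>r\<in>ring_of_integers K. \<forall>x\<in>I. r * x \<in> I)"

definition principal_ideal :: "complex set \<Rightarrow> complex \<Rightarrow> complex set" where
  "principal_ideal K a = {a * x | x. x \<in> ring_of_integers K}"

definition abs_norm :: "complex set \<Rightarrow> complex set \<Rightarrow> nat" where
  "abs_norm K I = card {(+) x ` I | x. x \<in> ring_of_integers K}"

definition same_ideal_class :: "complex set \<Rightarrow> complex set \<Rightarrow> complex set \<Rightarrow> bool" where
  "same_ideal_class K I J \<longleftrightarrow> (\<exists>x\<in>K. x \<noteq> 0 \<and> I = (*) x ` J)"

definition class_group_representatives :: "complex set \<Rightarrow> complex set set \<Rightarrow> bool" where
  "class_group_representatives K R \<longleftrightarrow>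
     (\<forall>g\<in>R. nonzero_integral_ideal K g) \<and>
     (\<forall>I. nonzero_integral_ideal K I \<longrightarrow> (\<exists>!g. g \<in> R \<and> same_ideal_class K I g))"

definition inseverable :: "complex set \<Rightarrow> complex set \<Rightarrow> bool" where
  "inseverable K a \<longleftrightarrow> nonzero_integral_ideal K a \<and>
     (\<forall>\<alpha>\<in>ring_of_integers K. a \<subseteq> principal_ideal K \<alpha> \<longrightarrow>
        principal_ideal K \<alpha> = ring_of_integers K)"

end

theory Submission
  imports Defs "Jordan_Normal_Form.Char_Poly"
begin
lemma det_trick:
  fixes x :: complex and vs :: "complex list"
  assumes nz: "\<exists>i<length vs. vs ! i \<noteq> 0"
    and rel: "\<And>i. i < length vs \<Longrightarrow> \<exists>c :: nat \<Rightarrow> int. x * vs ! i = (\<Sum>j<length vs. of_int (c j) * vs ! j)"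
  shows "algebraic_integer x"
proof -
  let ?n = "length vs"
  from rel have "\<forall>i. \<exists>c :: nat \<Rightarrow> int. i < ?n \<longrightarrow> x * vs ! i = (\<Sum>j<?n. of_int (c j) * vs ! j)" by blast
  then obtain C where C: "\<And>i. i < ?n \<Longrightarrow> x * vs ! i = (\<Sum>j<?n. of_int (C i j) * vs ! j)"
    by metis
  define A :: "int mat" where "A = mat ?n ?n (\<lambda>(i,j). C i j)"
  have A: "A \<in> carrier_mat ?n ?n" unfolding A_def by auto
  define Ac where "Ac = map_mat (of_int :: int \<Rightarrow> complex) A"
  have Ac: "Ac \<in> carrier_mat ?n ?n" unfolding Ac_def using A by auto
  define v where "v = vec ?n (\<lambda>i. vs ! i)"
  have v: "v \<in> carrier_vec ?n" unfolding v_def by auto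
  have vnz: "v \<noteq> 0\<^sub>v ?n" using nz unfolding v_def
    by (metis dim_vec index_vec index_zero_vec(1))
  have "Ac *\<^sub>v v = x \<cdot>\<^sub>v v"
  proof (rule eq_vecI)
    fix i assume "i < dim_vec (x \<cdot>\<^sub>v v)"
    then have i: "i < ?n" using v by simp
    have "(Ac *\<^sub>v v) $ i = (\<Sum>j<?n. of_int (C i j) * vs ! j)"
      using i unfolding Ac_def A_def v_def mult_mat_vec_def scalar_prod_def
      by (auto intro!: sum.cong simp: lessThan_atLeast0)
    also have "\<dots> = (x \<cdot>\<^sub>v v) $ i" using C[OF i] i unfolding v_def by simp
    finally show "(Ac *\<^sub>v v) $ i = (x \<cdot>\<^sub>v v) $ i" .
  qed (insert Ac v, auto)
  then have "eigenvalue Ac x" unfolding eigenvalue_def eigenvector_def using Ac v vnz by (intro exI[of _ v]) auto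
  then have "poly (char_poly Ac) x = 0" using eigenvalue_root_char_poly[OF Ac] by simp
  moreover have "char_poly Ac = map_poly of_int (char_poly A)"
    unfolding Ac_def using of_int_hom.char_poly_hom[OF A] by simp
  moreover have "lead_coeff (char_poly A) = 1" using degree_monic_char_poly[OF A] by simp
  ultimately show ?thesis unfolding algebraic_integer_def by metis
qed

inductive_set zspan :: "complex set \<Rightarrow> complex set" for A where
  zs_base: "a \<in> A \<Longrightarrow> a \<in> zspan A"
| zs_zero: "0 \<in> zspan A"
| zs_diff: "u \<in> zspan A \<Longrightarrow> w \<in> zspan A \<Longrightarrow> u - w \<in> zspan A"

lemma zs_neg: "u \<in> zspan A \<Longrightarrow> - u \<in> zspan A"
  using zs_diff[OF zs_zero, of u A] by simp

lemma zs_add: "u \<in> zspan A \<Longrightarrow> w \<in> zspan A \<Longrightarrow> u + w \<in> zspan A"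
  using zs_diff[of u A "- w"] zs_neg[of w A] by simp

lemma zs_nat_mult: "u \<in> zspan A \<Longrightarrow> of_nat n * u \<in> zspan A"
  by (induction n) (auto simp: distrib_right intro: zs_add zs_zero)

lemma zs_int_mult: assumes u: "u \<in> zspan A" shows "of_int c * u \<in> zspan A"
proof (cases "c \<ge> 0")
  case True
  then obtain n where "c = int n" by (metis nonneg_eq_int)
  then show ?thesis using zs_nat_mult[OF u] by simp
next
  case False
  then have "c = - int (nat (- c))" by simp
  then obtain n where "c = - int n" by blast
  then show ?thesis using zs_neg[OF zs_nat_mult[OF u, of n]] by simp
qed
  
lemma zs_sum: "finite I \<Longrightarrow> (\<And>i. i \<in> I \<Longrightarrow> f i \<in> zspan A) \<Longrightarrow> sum f I \<in> zspan A"
  by (induction I rule: finite_induct) (auto intro: zs_add zs_zero)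

lemma zs_mono: "u \<in> zspan A \<Longrightarrow> A \<subseteq> B \<Longrightarrow> u \<in> zspan B"
  by (induction rule: zspan.induct) (auto intro: zspan.intros)

lemma zs_mult:
  assumes "u \<in> zspan A" "w \<in> zspan B"
  shows "u * w \<in> zspan {a * b | a b. a \<in> A \<and> b \<in> B}"
  using assms(1)
proof (induction rule: zspan.induct)
  case (zs_base a)
  from assms(2) show ?case
    by (induction rule: zspan.induct) (auto simp: right_diff_distrib intro: zspan.intros zs_base)
next
  case zs_zero then show ?case by (simp add: zspan.zs_zero)
next
  case (zs_diff u1 u2) then show ?case by (simp add: left_diff_distrib zspan.zs_diff)
qed

lemma zs_list:
  assumes "u \<in> zspan (set vs)"
  shows "\<exists>c :: nat \<Rightarrow> int. u = (\<Sum>j<length vs. of_int (c j) * vs ! j)"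
  using assms
proof (induction rule: zspan.induct)
  case (zs_base a)
  then obtain k where k: "k < length vs" "vs ! k = a" by (auto simp: in_set_conv_nth)
  have "(\<Sum>j<length vs. of_int (if j = k then 1 else 0) * vs ! j) = a"
  proof -
    have "(\<Sum>j<length vs. of_int (if j = k then 1 else 0) * vs ! j) = (\<Sum>j<length vs. if j = k then vs ! j else 0)"
      by (rule sum.cong) auto
    then show ?thesis using k by simp
  qed
  then show ?case by (intro exI[of _ "\<lambda>j. if j = k then 1 else 0"]) simp
next
  case zs_zero then show ?case by (intro exI[of _ "\<lambda>_. 0"]) simp
next
  case (zs_diff u w)
  then obtain c1 c2 where "u = (\<Sum>j<length vs. of_int (c1 j) * vs ! j)"
     "w = (\<Sum>j<length vs. of_int (c2 j) * vs ! j)" by blast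
  then show ?case
    by (intro exI[of _ "\<lambda>j. c1 j - c2 j"]) (simp add: sum_subtractf left_diff_distrib)
qed

lemma det_trick2:
  assumes "finite A" "\<exists>a\<in>A. a \<noteq> 0" "\<And>a. a \<in> A \<Longrightarrow> x * a \<in> zspan A"
  shows "algebraic_integer x"
proof -
  obtain vs where vs: "set vs = A" using finite_list[OF assms(1)] by blast
  show ?thesis
  proof (rule det_trick[of vs])
    show "\<exists>i<length vs. vs ! i \<noteq> 0" using assms(2) vs by (auto simp: in_set_conv_nth)
    fix i assume "i < length vs"
    then have "vs ! i \<in> A" using vs by auto
    then show "\<exists>c. x * vs ! i = (\<Sum>j<length vs. of_int (c j) * vs ! j)"
      using zs_list[of _ vs] assms(3) vs by auto
  qed
qed

lemma alg_int_powers: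
  assumes "algebraic_integer x"
  shows "\<exists>d>0. \<forall>k. x ^ k \<in> zspan {x ^ i | i. i < d}"
proof -
  obtain p :: "int poly" where p: "lead_coeff p = 1" "poly (map_poly of_int p) x = 0"
    using assms unfolding algebraic_integer_def by blast
  define d where "d = degree p"
  have cm: "coeff (map_poly (of_int :: int \<Rightarrow> complex) p) i = of_int (coeff p i)" for i
    by (simp add: coeff_map_poly)
  have dm: "degree (map_poly (of_int :: int \<Rightarrow> complex) p) = d"
    unfolding d_def by (simp add: degree_map_poly)
  have "0 = (\<Sum>i\<le>d. of_int (coeff p i) * x ^ i)"
    using p(2) unfolding poly_altdef dm cm by simp
  also have "\<dots> = (\<Sum>i<d. of_int (coeff p i) * x ^ i) + x ^ d"
    using p(1) unfolding d_def by (simp add: lessThan_Suc_atMost[symmetric])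
  finally have xd: "x ^ d = - (\<Sum>i<d. of_int (coeff p i) * x ^ i)" by (simp add: eq_neg_iff_add_eq_0 add.commute)
  have d0: "d > 0"
  proof (rule ccontr)
    assume "\<not> d > 0" then have "d = 0" by simp
    then show False using xd by simp
  qed
  have "x ^ k \<in> zspan {x ^ i | i. i < d}" for k
  proof (induction k rule: less_induct)
    case (less k)
    show ?case
    proof (cases "k < d")
      case True then show ?thesis by (auto intro: zs_base)
    next
      case False
      have "x ^ k = x ^ (k - d) * x ^ d" using False by (simp add: power_add[symmetric])
      also have "\<dots> = - (\<Sum>i<d. of_int (coeff p i) * x ^ (k - d + i))"
        unfolding xd by (simp add: sum_distrib_left power_add mult.assoc mult.left_commute)
      also have "\<dots> \<in> zspan {x ^ i | i. i < d}"
        using False by (intro zs_neg zs_sum zs_int_mult less) auto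
      finally show ?thesis .
    qed
  qed
  then show ?thesis using d0 by blast
qed

lemma alg_int_add_mult:
  assumes "algebraic_integer x" "algebraic_integer y"
  shows "algebraic_integer (x + y)" "algebraic_integer (x * y)"
proof -
  obtain d where d: "d > 0" "\<And>k. x ^ k \<in> zspan {x ^ i | i. i < d}"
    using alg_int_powers[OF assms(1)] by blast
  obtain e where e: "e > 0" "\<And>k. y ^ k \<in> zspan {y ^ i | i. i < e}"
    using alg_int_powers[OF assms(2)] by blast
  define A where "A = {a * b | a b. a \<in> {x ^ i | i. i < d} \<and> b \<in> {y ^ i | i. i < e}}"
  have fin: "finite A"
  proof -
    have "A = (\<lambda>(i, j). x ^ i * y ^ j) ` ({..<d} \<times> {..<e})" unfolding A_def by auto
    then show ?thesis by simp
  qed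
  have "x ^ 0 * y ^ 0 \<in> A" unfolding A_def using d e by blast
  then have nz: "\<exists>a\<in>A. a \<noteq> 0" by (intro bexI[of _ "x ^ 0 * y ^ 0"]) auto
  have pp: "x ^ i * y ^ j \<in> zspan A" for i j
    unfolding A_def by (rule zs_mult[OF d(2) e(2)])
  have gen: "a \<in> A \<Longrightarrow> \<exists>i j. a = x ^ i * y ^ j" for a unfolding A_def by auto
  show "algebraic_integer (x + y)"
  proof (rule det_trick2[OF fin nz])
    fix a assume "a \<in> A"
    then obtain i j where a: "a = x ^ i * y ^ j" using gen by blast
    have "(x + y) * a = x ^ Suc i * y ^ j + x ^ i * y ^ Suc j"
      unfolding a by (simp add: algebra_simps)
    then show "(x + y) * a \<in> zspan A" by (simp only:) (rule zs_add[OF pp pp])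
  qed
  show "algebraic_integer (x * y)"
  proof (rule det_trick2[OF fin nz])
    fix a assume "a \<in> A"
    then obtain i j where a: "a = x ^ i * y ^ j" using gen by blast
    have "(x * y) * a = x ^ Suc i * y ^ Suc j"
      unfolding a by (simp add: mult_ac)
    then show "(x * y) * a \<in> zspan A" by (simp only:) (rule pp)
  qed
qed

lemma alg_int_of_int: "algebraic_integer (of_int k)"
  unfolding algebraic_integer_def
  by (intro exI[of _ "[:-k, 1:]"]) simp

lemma alg_int_diff:
  assumes "algebraic_integer x" "algebraic_integer y"
  shows "algebraic_integer (x - y)"
proof -
  have "algebraic_integer (of_int (-1) * y)" by (rule alg_int_add_mult(2)[OF alg_int_of_int assms(2)])
  then have "algebraic_integer (x + of_int (-1) * y)" by (rule alg_int_add_mult(1)[OF assms(1)])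
  then show ?thesis by simp
qed


definition subgrp :: "'a::ab_group_add set \<Rightarrow> bool" where
  "subgrp G \<longleftrightarrow> 0 \<in> G \<and> (\<forall>x\<in>G. \<forall>y\<in>G. x - y \<in> G)"

lemma subgrp_zero: "subgrp G \<Longrightarrow> 0 \<in> G" unfolding subgrp_def by blast
lemma subgrp_diff: "subgrp G \<Longrightarrow> x \<in> G \<Longrightarrow> y \<in> G \<Longrightarrow> x - y \<in> G" unfolding subgrp_def by blast
lemma subgrp_neg: "subgrp G \<Longrightarrow> x \<in> G \<Longrightarrow> - x \<in> G"
  using subgrp_diff[of G 0 x] subgrp_zero[of G] by simp
lemma subgrp_add: "subgrp G \<Longrightarrow> x \<in> G \<Longrightarrow> y \<in> G \<Longrightarrow> x + y \<in> G"
  using subgrp_diff[of G x "- y"] subgrp_neg[of G y] by simp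
lemma subgrp_nat_mult: "subgrp G \<Longrightarrow> x \<in> G \<Longrightarrow> of_nat n * (x :: 'a :: comm_ring_1) \<in> G"
  by (induction n) (auto simp: distrib_right intro: subgrp_add subgrp_zero)
lemma subgrp_int_mult:
  assumes G: "subgrp G" and x: "x \<in> G" shows "of_int c * (x :: 'a :: comm_ring_1) \<in> G"
proof (cases "c \<ge> 0")
  case True
  then have "c = int (nat c)" by simp
  then show ?thesis using subgrp_nat_mult[OF G x, of "nat c"] by (metis of_int_of_nat_eq)
next
  case False
  then have "c = - int (nat (- c))" by simp
  then show ?thesis using subgrp_neg[OF G subgrp_nat_mult[OF G x, of "nat (- c)"]]
    by (metis mult_minus_left of_int_minus of_int_of_nat_eq)
qed

lemma subgrp_sum: "subgrp G \<Longrightarrow> finite I \<Longrightarrow> (\<And>i. i \<in> I \<Longrightarrow> f i \<in> G) \<Longrightarrow> sum f I \<in> G"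
proof -
  assume G: "subgrp G"
  show "finite I \<Longrightarrow> (\<And>i. i \<in> I \<Longrightarrow> f i \<in> G) \<Longrightarrow> sum f I \<in> G"
    by (induction I rule: finite_induct) (auto intro: subgrp_add[OF G] subgrp_zero[OF G])
qed

lemma common_denom:
  fixes r :: "'b \<Rightarrow> rat"
  assumes "finite S"
  shows "\<exists>D::int. D > 0 \<and> (\<forall>s\<in>S. \<exists>k::int. of_int D * r s = of_int k)"
  using assms
proof (induction S rule: finite_induct)
  case empty then show ?case by (intro exI[of _ 1]) simp
next
  case (insert x S)
  then obtain D where D: "D > 0" "\<forall>s\<in>S. \<exists>k::int. of_int D * r s = of_int k" by blast
  obtain n d where nd: "quotient_of (r x) = (n, d)" by (cases "quotient_of (r x)")
  have d: "d > 0" using quotient_of_denom_pos[OF nd] .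
  have rx: "r x = of_int n / of_int d" using quotient_of_div[OF nd] .
  have "\<exists>k. of_int (D * d) * r s = of_int k" if s: "s \<in> insert x S" for s
  proof (cases "s = x")
    case True
    then have "of_int (D * d) * r s = of_int (D * n)" using d rx by simp
    then show ?thesis by blast
  next
    case False
    then have "s \<in> S" using s by blast
    then obtain k where "of_int D * r s = of_int k" using D by blast
    then have "of_int (D * d) * r s = of_int (k * d)" by (simp add: algebra_simps)
    then show ?thesis by blast
  qed
  moreover have "D * d > 0" using D d by simp
  ultimately show ?case by blast
qed

lemma rank1_pigeon:
  fixes G :: "complex set" and v :: complex and m :: nat
  assumes m: "m > 0" and G: "subgrp G" and Gv: "G \<subseteq> {of_rat a * v | a. True}"
    and S: "finite S" "S \<subseteq> G" "card S > m"
  shows "\<exists>x\<in>S. \<exists>y\<in>S. x \<noteq> y \<and> (\<exists>z\<in>G. x - y = of_nat m * z)"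
proof -
  have "\<not> card S \<le> Suc 0" using m S by simp
  then obtain s1 s2 where s12: "s1 \<in> S" "s2 \<in> S" "s1 \<noteq> s2"
    using card_le_Suc0_iff_eq[OF S(1)] by blast
  then obtain s0 where s0: "s0 \<in> S" "s0 \<noteq> 0" by blast
  have "\<forall>s\<in>S. \<exists>a. s = of_rat a * v" using S Gv by blast
  then obtain a where a: "\<And>s. s \<in> S \<Longrightarrow> s = of_rat (a s) * v" by metis
  have v0: "v \<noteq> 0" using a[OF s0(1)] s0 by auto
  obtain D :: int where D: "D > 0" "\<And>s. s \<in> S \<Longrightarrow> \<exists>k::int. of_int D * a s = of_int k"
    using common_denom[OF S(1), of a] by blast
  then obtain k where k: "\<And>s. s \<in> S \<Longrightarrow> of_int D * a s = of_int (k s)" by metis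
  have sk: "s = (of_int (k s) / of_int D) * v" if "s \<in> S" for s
  proof -
    have "of_rat (a s) = (of_rat (of_int (k s) / of_int D) :: complex)"
      using k[OF that] D by (simp add: field_simps)
    then show ?thesis using a[OF that] by (simp add: of_rat_divide)
  qed
  define L where "L = {t::int. (of_int t / of_int D) * v \<in> G}"
  have L: "subgrp L" unfolding subgrp_def L_def
    using subgrp_zero[OF G] subgrp_diff[OF G] by (auto simp: diff_divide_distrib left_diff_distrib)
  have kL: "s \<in> S \<Longrightarrow> k s \<in> L" for s unfolding L_def using sk S by auto
  have k0: "k s0 \<noteq> 0" using sk[OF s0(1)] s0 by auto
  have "int (nat \<bar>k s0\<bar>) \<in> L"
    using kL[OF s0(1)] subgrp_neg[OF L] by (cases "k s0 \<ge> 0") auto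
  then have ex: "\<exists>n. 0 < n \<and> int n \<in> L" using k0 by (intro exI[of _ "nat \<bar>k s0\<bar>"]) auto
  define g where "g = (LEAST n. 0 < n \<and> int n \<in> L)"
  have g: "0 < g" "int g \<in> L" using LeastI_ex[OF ex] unfolding g_def by auto
  have gmin: "\<not> (0 < n \<and> int n \<in> L)" if "n < g" for n
    using not_less_Least[of n "\<lambda>n. 0 < n \<and> int n \<in> L"] that unfolding g_def by blast
  have gdvd: "int g dvd t" if "t \<in> L" for t
  proof -
    have "(t div int g) * int g \<in> L" using subgrp_int_mult[OF L g(2), of "t div int g"] by simp
    from subgrp_diff[OF L that this] have "t mod int g \<in> L" by (metis minus_div_mult_eq_mod)
    moreover have "0 \<le> t mod int g" "t mod int g < int g" using g by auto
    ultimately have "t mod int g = 0" using gmin[of "nat (t mod int g)"] by (cases "t mod int g = 0") (auto simp: nat_less_iff)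
    then show ?thesis by auto
  qed
  define f where "f s = (k s div int g) mod int m" for s
  have "f ` S \<subseteq> {0..<int m}" unfolding f_def using m by auto
  then have "card (f ` S) \<le> m" using card_mono[of "{0..<int m}"] by fastforce
  then have "\<not> inj_on f S" using S(3) card_image by fastforce
  then obtain x y where xy: "x \<in> S" "y \<in> S" "x \<noteq> y" "f x = f y" unfolding inj_on_def by blast
  then have "int m dvd (k x div int g - k y div int g)" unfolding f_def by (simp add: mod_eq_dvd_iff)
  then obtain r where r: "k x div int g - k y div int g = int m * r" by blast
  have kx: "k x = int g * (k x div int g)" using gdvd[OF kL[OF xy(1)]] by simp
  have ky: "k y = int g * (k y div int g)" using gdvd[OF kL[OF xy(2)]] by simp
  have kxy: "k x - k y = int m * (int g * r)"
    using kx ky r by (metis mult.left_commute right_diff_distrib)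
  define z where "z = (of_int (int g * r) / of_int D) * v"
  have "int g * r \<in> L" using subgrp_int_mult[OF L g(2), of r] by (simp add: mult.commute)
  then have zG: "z \<in> G" unfolding z_def L_def by simp
  have "x - y = (of_int (k x - k y) / of_int D) * v" using sk[OF xy(1)] sk[OF xy(2)]
    by (simp add: diff_divide_distrib left_diff_distrib)
  also have "\<dots> = of_nat m * z" unfolding kxy z_def by simp
  finally show ?thesis using xy zG by blast
qed


definition qspan :: "complex list \<Rightarrow> complex set" where
  "qspan vs = {(\<Sum>i<length vs. of_rat (q i) * vs ! i) | q. True}"

lemma qspanI: "z = (\<Sum>i<length ws. of_rat (q i) * ws ! i) \<Longrightarrow> z \<in> qspan ws"
  unfolding qspan_def by blast

lemma qspan_Nil: "qspan [] = {0}" unfolding qspan_def by simp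

lemma qspan_Cons: "qspan (v # ws) = {of_rat a * v + w | a w. w \<in> qspan ws}"
proof (rule equalityI; rule subsetI)
  fix z assume "z \<in> qspan (v # ws)"
  then obtain q where "z = (\<Sum>i<length (v # ws). of_rat (q i) * (v # ws) ! i)" unfolding qspan_def by blast
  then have "z = of_rat (q 0) * v + (\<Sum>i<length ws. of_rat ((q \<circ> Suc) i) * ws ! i)"
    by (simp add: sum.lessThan_Suc_shift del: sum.lessThan_Suc)
  moreover have "(\<Sum>i<length ws. of_rat ((q \<circ> Suc) i) * ws ! i) \<in> qspan ws" by (rule qspanI) (rule refl)
  ultimately show "z \<in> {of_rat a * v + w | a w. w \<in> qspan ws}" by blast
next
  fix z assume "z \<in> {of_rat a * v + w | a w. w \<in> qspan ws}"
  then obtain a q where z: "z = of_rat a * v + (\<Sum>i<length ws. of_rat (q i) * ws ! i)"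
    unfolding qspan_def by blast
  have "z = (\<Sum>i<length (v # ws). of_rat (case_nat a q i) * (v # ws) ! i)"
    unfolding z by (simp add: sum.lessThan_Suc_shift del: sum.lessThan_Suc)
  then show "z \<in> qspan (v # ws)" by (rule qspanI)
qed

lemma qspan_zero: "0 \<in> qspan ws" unfolding qspan_def by (intro CollectI exI[of _ "\<lambda>_. 0"]) simp

lemma qspan_diff: "x \<in> qspan ws \<Longrightarrow> y \<in> qspan ws \<Longrightarrow> x - y \<in> qspan ws"
proof -
  assume "x \<in> qspan ws" "y \<in> qspan ws"
  then obtain q1 q2 where "x = (\<Sum>i<length ws. of_rat (q1 i) * ws ! i)" "y = (\<Sum>i<length ws. of_rat (q2 i) * ws ! i)"
    unfolding qspan_def by blast
  then have "x - y = (\<Sum>i<length ws. of_rat (q1 i - q2 i) * ws ! i)"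
    by (simp add: sum_subtractf of_rat_diff left_diff_distrib)
  then show ?thesis by (rule qspanI)
qed

lemma qspan_scale: "x \<in> qspan ws \<Longrightarrow> of_rat c * x \<in> qspan ws"
proof -
  assume "x \<in> qspan ws"
  then obtain q where "x = (\<Sum>i<length ws. of_rat (q i) * ws ! i)" unfolding qspan_def by blast
  then have "of_rat c * x = (\<Sum>i<length ws. of_rat (c * q i) * ws ! i)"
    by (simp add: sum_distrib_left of_rat_mult mult.assoc)
  then show ?thesis by (rule qspanI)
qed

lemma qspan_subgrp: "subgrp (qspan ws)" unfolding subgrp_def using qspan_zero qspan_diff by blast

lemma qspan_add: "x \<in> qspan ws \<Longrightarrow> y \<in> qspan ws \<Longrightarrow> x + y \<in> qspan ws"
  using subgrp_add[OF qspan_subgrp] .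

definition co :: "complex \<Rightarrow> complex list \<Rightarrow> complex \<Rightarrow> rat" where
  "co v ws z = (THE a. \<exists>w\<in>qspan ws. z = of_rat a * v + w)"
definition pr :: "complex \<Rightarrow> complex list \<Rightarrow> complex \<Rightarrow> complex" where
  "pr v ws z = z - of_rat (co v ws z) * v"

lemma decomp_uniq:
  assumes "v \<notin> qspan ws" "w1 \<in> qspan ws" "w2 \<in> qspan ws" "of_rat a1 * v + w1 = of_rat a2 * v + w2"
  shows "a1 = a2"
proof (rule ccontr)
  assume ne: "a1 \<noteq> a2"
  have e: "of_rat (a1 - a2) * v = w2 - w1" using assms(4) by (simp add: of_rat_diff algebra_simps)
  have nz: "(of_rat (a1 - a2) :: complex) \<noteq> 0" using ne by simp
  have "v = inverse (of_rat (a1 - a2)) * (w2 - w1)" unfolding e[symmetric] using nz by simp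
  then have "v = of_rat (inverse (a1 - a2)) * (w2 - w1)" by (simp add: of_rat_inverse)
  then have "v \<in> qspan ws" using qspan_scale qspan_diff assms(2,3) by metis
  then show False using assms(1) by blast
qed

lemma co_eq:
  assumes "v \<notin> qspan ws" "w \<in> qspan ws"
  shows "co v ws (of_rat a * v + w) = a" "pr v ws (of_rat a * v + w) = w"
proof -
  show c: "co v ws (of_rat a * v + w) = a" unfolding co_def
    using assms decomp_uniq[OF assms(1)] by (intro the_equality) blast+
  show "pr v ws (of_rat a * v + w) = w" unfolding pr_def c by simp
qed

lemma pr_span:
  assumes "v \<notin> qspan ws" "z \<in> qspan (v # ws)"
  shows "pr v ws z \<in> qspan ws"
  using assms co_eq unfolding qspan_Cons by auto

lemma pr_diff:
  assumes "v \<notin> qspan ws" "x \<in> qspan (v # ws)" "y \<in> qspan (v # ws)"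
  shows "pr v ws (x - y) = pr v ws x - pr v ws y"
proof -
  obtain a1 w1 where 1: "x = of_rat a1 * v + w1" "w1 \<in> qspan ws" using assms(2) unfolding qspan_Cons by blast
  obtain a2 w2 where 2: "y = of_rat a2 * v + w2" "w2 \<in> qspan ws" using assms(3) unfolding qspan_Cons by blast
  have e: "x - y = of_rat (a1 - a2) * v + (w1 - w2)" using 1 2 by (simp add: of_rat_diff algebra_simps)
  have "pr v ws (x - y) = w1 - w2" unfolding e by (rule co_eq(2)[OF assms(1) qspan_diff[OF 1(2) 2(2)]])
  moreover have "pr v ws x = w1" "pr v ws y = w2" unfolding 1(1) 2(1) using co_eq(2)[OF assms(1)] 1(2) 2(2) by auto
  ultimately show ?thesis by simp
qed

lemma pr_nat_mult:
  assumes "v \<notin> qspan ws" "x \<in> qspan (v # ws)"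
  shows "pr v ws (of_nat m * x) = of_nat m * pr v ws x"
proof -
  obtain a1 w1 where 1: "x = of_rat a1 * v + w1" "w1 \<in> qspan ws" using assms(2) unfolding qspan_Cons by blast
  have e: "of_nat m * x = of_rat (of_nat m * a1) * v + of_rat (of_nat m) * w1" using 1
    by (simp add: of_rat_mult algebra_simps)
  have "pr v ws (of_nat m * x) = of_rat (of_nat m) * w1" unfolding e by (rule co_eq(2)[OF assms(1) qspan_scale[OF 1(2)]])
  moreover have "pr v ws x = w1" unfolding 1(1) using co_eq(2)[OF assms(1)] 1(2) by auto
  ultimately show ?thesis by simp
qed

lemma pr_zero:
  assumes "pr v ws z = 0" shows "z = of_rat (co v ws z) * v"
  using assms unfolding pr_def by simp


lemma pigeon:
  fixes m :: nat
  assumes m: "m > 0"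
  shows "subgrp G \<Longrightarrow> G \<subseteq> qspan vs \<Longrightarrow> finite S \<Longrightarrow> S \<subseteq> G \<Longrightarrow> card S > m ^ length vs \<Longrightarrow>
    \<exists>x\<in>S. \<exists>y\<in>S. x \<noteq> y \<and> (\<exists>z\<in>G. x - y = of_nat m * z)"
proof (induction vs arbitrary: G S)
  case Nil
  then have "S \<subseteq> {0}" using qspan_Nil by auto
  then have "card S \<le> 1" using card_mono[of "{0}" S] by simp
  then show ?case using Nil by simp
next
  case (Cons v ws)
  note G = Cons.prems(1) and Gs = Cons.prems(2) and S = Cons.prems(3-5)
  show ?case
  proof (cases "v \<in> qspan ws")
    case True
    have sub: "qspan (v # ws) \<subseteq> qspan ws"
    proof
      fix z assume "z \<in> qspan (v # ws)"
      then obtain a w where "z = of_rat a * v + w" "w \<in> qspan ws" unfolding qspan_Cons by blast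
      then show "z \<in> qspan ws" using qspan_add[OF qspan_scale[OF True]] by simp
    qed
    have le: "m ^ length ws \<le> m ^ length (v # ws)" by (rule power_increasing) (use m in auto)
    have "G \<subseteq> qspan ws" using Gs sub by blast
    moreover have "card S > m ^ length ws" using le S(3) by (rule le_less_trans)
    ultimately show ?thesis using Cons.IH[OF G _ S(1,2)] by blast
  next
    case False
    define P where "P = pr v ws"
    have GV: "x \<in> G \<Longrightarrow> x \<in> qspan (v # ws)" for x using Gs by blast
    have Pd: "x \<in> G \<Longrightarrow> y \<in> G \<Longrightarrow> P (x - y) = P x - P y" for x y
      unfolding P_def using pr_diff[OF False GV GV] by blast
    have Pm: "x \<in> G \<Longrightarrow> P (of_nat k * x) = of_nat k * P x" for x k
      unfolding P_def using pr_nat_mult[OF False GV] by blast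
    define G2 where "G2 = P ` G"
    have P0: "P 0 = 0" using Pd[OF subgrp_zero[OF G] subgrp_zero[OF G]] by simp
    have G2: "subgrp G2" unfolding subgrp_def G2_def
    proof (intro conjI ballI)
      show "0 \<in> P ` G" using P0 subgrp_zero[OF G] by (metis image_eqI)
      fix a b assume "a \<in> P ` G" "b \<in> P ` G"
      then obtain x y where "x \<in> G" "y \<in> G" "a = P x" "b = P y" by blast
      then show "a - b \<in> P ` G" using Pd subgrp_diff[OF G] by (metis image_eqI)
    qed
    have G2s: "G2 \<subseteq> qspan ws" unfolding G2_def P_def using pr_span[OF False] GV by blast
    define rel where "rel x y \<longleftrightarrow> (\<exists>z\<in>G2. P x - P y = of_nat m * z)" for x y
    show ?thesis
    proof (cases "\<exists>x1\<in>S. card {x\<in>S. rel x x1} > m")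
      case True
      then obtain x1 where x1: "x1 \<in> S" and cC: "card {x\<in>S. rel x x1} > m" by blast
      define C where "C = {x\<in>S. rel x x1}"
      have "\<forall>x\<in>C. \<exists>g\<in>G. P x - P x1 = of_nat m * P g" unfolding C_def rel_def G2_def by blast
      then obtain gf where gf: "\<And>x. x \<in> C \<Longrightarrow> gf x \<in> G" "\<And>x. x \<in> C \<Longrightarrow> P x - P x1 = of_nat m * P (gf x)"
        by metis
      define yf where "yf x = x - x1 - of_nat m * gf x" for x
      have CG: "x \<in> C \<Longrightarrow> x \<in> G" for x unfolding C_def using S by blast
      have x1G: "x1 \<in> G" using x1 S by blast
      have yG: "yf x \<in> G" if "x \<in> C" for x
        unfolding yf_def using subgrp_diff[OF G subgrp_diff[OF G CG[OF that] x1G] subgrp_nat_mult[OF G gf(1)[OF that]]] .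
      have yP: "P (yf x) = 0" if "x \<in> C" for x
      proof -
        have "P (yf x) = P (x - x1) - P (of_nat m * gf x)"
          unfolding yf_def by (rule Pd[OF subgrp_diff[OF G CG[OF that] x1G] subgrp_nat_mult[OF G gf(1)[OF that]]])
        also have "\<dots> = 0" using Pd[OF CG[OF that] x1G] Pm[OF gf(1)[OF that]] gf(2)[OF that] by simp
        finally show ?thesis .
      qed
      define G1 where "G1 = {u\<in>G. \<exists>a. u = of_rat a * v}"
      have G1: "subgrp G1" unfolding subgrp_def G1_def
      proof (intro conjI ballI)
        show "0 \<in> {u \<in> G. \<exists>a. u = of_rat a * v}" using subgrp_zero[OF G] by (auto intro: exI[of _ 0])
        fix a b assume "a \<in> {u \<in> G. \<exists>a. u = of_rat a * v}" "b \<in> {u \<in> G. \<exists>a. u = of_rat a * v}"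
        then obtain c d where "a \<in> G" "b \<in> G" "a = of_rat c * v" "b = of_rat d * v" by blast
        then show "a - b \<in> {u \<in> G. \<exists>a. u = of_rat a * v}" using subgrp_diff[OF G]
          by (auto intro!: exI[of _ "c - d"] simp: of_rat_diff left_diff_distrib)
      qed
      have G1v: "G1 \<subseteq> {of_rat a * v | a. True}" unfolding G1_def by blast
      have yG1: "yf ` C \<subseteq> G1" unfolding G1_def using yG yP pr_zero unfolding P_def by blast
      have finC: "finite C" unfolding C_def using S(1) by simp
      show ?thesis
      proof (cases "inj_on yf C")
        case True
        then have "card (yf ` C) > m" using cC card_image unfolding C_def by metis
        from rank1_pigeon[OF m G1 G1v finite_imageI[OF finC] yG1 this]
        obtain x x' z where xx: "x \<in> C" "x' \<in> C" "yf x \<noteq> yf x'" and z: "z \<in> G1" "yf x - yf x' = of_nat m * z"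
          by blast
        have "x - x' = of_nat m * (z + (gf x - gf x'))"
          using z(2) unfolding yf_def by (simp add: algebra_simps)
        moreover have "z + (gf x - gf x') \<in> G"
          using z(1) gf(1)[OF xx(1)] gf(1)[OF xx(2)] G unfolding G1_def by (blast intro: subgrp_add subgrp_diff)
        moreover have "x \<noteq> x'" using xx by blast
        ultimately show ?thesis using xx unfolding C_def by blast
      next
        case False
        then obtain x x' where xx: "x \<in> C" "x' \<in> C" "x \<noteq> x'" "yf x = yf x'" unfolding inj_on_def by blast
        then have "x - x' = of_nat m * (gf x - gf x')" unfolding yf_def by (simp add: algebra_simps)
        moreover have "gf x - gf x' \<in> G" using gf(1) xx subgrp_diff[OF G] by blast
        ultimately show ?thesis using xx unfolding C_def by blast
      qed
    next
      case False
      then have small: "\<And>t. t \<in> S \<Longrightarrow> card {x\<in>S. rel x t} \<le> m" by (simp add: not_less)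
      have SG: "x \<in> S \<Longrightarrow> x \<in> G" for x using S by blast
      have P2: "x \<in> S \<Longrightarrow> P x \<in> G2" for x unfolding G2_def using SG by blast
      have rrefl: "x \<in> S \<Longrightarrow> rel x x" for x unfolding rel_def using subgrp_zero[OF G2] by force
      have rsym: "rel x y \<Longrightarrow> rel y x" for x y unfolding rel_def
      proof -
        assume "\<exists>z\<in>G2. P x - P y = of_nat m * z"
        then obtain z where "z \<in> G2" "P x - P y = of_nat m * z" by blast
        then show "\<exists>z\<in>G2. P y - P x = of_nat m * z" using subgrp_neg[OF G2]
          by (intro bexI[of _ "- z"]) (auto simp: algebra_simps)
      qed
      have rtrans: "rel x y \<Longrightarrow> rel y w \<Longrightarrow> rel x w" for x y w unfolding rel_def
      proof -
        assume "\<exists>z\<in>G2. P x - P y = of_nat m * z" "\<exists>z\<in>G2. P y - P w = of_nat m * z"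
        then obtain z1 z2 where "z1 \<in> G2" "P x - P y = of_nat m * z1" "z2 \<in> G2" "P y - P w = of_nat m * z2" by blast
        then show "\<exists>z\<in>G2. P x - P w = of_nat m * z" using subgrp_add[OF G2]
          by (intro bexI[of _ "z1 + z2"]) (auto simp: algebra_simps)
      qed
      define r where "r x = (SOME t. t \<in> S \<and> rel x t)" for x
      have r: "r x \<in> S \<and> rel x (r x)" if "x \<in> S" for x
        unfolding r_def by (rule someI[where P="\<lambda>t. t \<in> S \<and> rel x t"]) (use rrefl that in blast)
      have req: "rel x x' \<Longrightarrow> r x = r x'" for x x'
      proof -
        assume "rel x x'"
        then have "(\<lambda>t. t \<in> S \<and> rel x t) = (\<lambda>t. t \<in> S \<and> rel x' t)" using rsym rtrans by blast
        then show ?thesis unfolding r_def by simp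
      qed
      define T where "T = r ` S"
      have TS: "T \<subseteq> S" unfolding T_def using r by blast
      have finT: "finite T" unfolding T_def using S(1) by simp
      have rT: "t \<in> T \<Longrightarrow> r t = t" for t
      proof -
        assume "t \<in> T"
        then obtain x where x: "x \<in> S" "t = r x" unfolding T_def by blast
        then have "rel t x" using r rsym by blast
        then show "r t = t" using req x by simp
      qed
      have cardT: "card T \<le> m ^ length ws"
      proof (rule ccontr)
        assume "\<not> card T \<le> m ^ length ws"
        moreover have injP: "inj_on P T"
        proof (rule inj_onI)
          fix t t' assume tt: "t \<in> T" "t' \<in> T" "P t = P t'"
          then have "rel t t'" unfolding rel_def using subgrp_zero[OF G2] by force
          then show "t = t'" using req rT tt by metis
        qed
        ultimately have "card (P ` T) > m ^ length ws" by (simp add: card_image)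
        from Cons.IH[OF G2 G2s finite_imageI[OF finT] _ this] obtain a b z where
          ab: "a \<in> P ` T" "b \<in> P ` T" "a \<noteq> b" "z \<in> G2" "a - b = of_nat m * z"
          using P2 TS by blast
        then obtain t t' where "t \<in> T" "t' \<in> T" "a = P t" "b = P t'" by blast
        moreover have "rel t t'" unfolding rel_def using ab calculation by metis
        ultimately show False using req rT ab(3) by metis
      qed
      have "S \<subseteq> (\<Union>t\<in>T. {x\<in>S. rel x t})" unfolding T_def using r by blast
      then have "card S \<le> card (\<Union>t\<in>T. {x\<in>S. rel x t})"
        by (intro card_mono) (use finT S(1) in auto)
      also have "\<dots> \<le> (\<Sum>t\<in>T. card {x\<in>S. rel x t})" by (rule card_UN_le[OF finT])
      also have "\<dots> \<le> (\<Sum>t\<in>T. m)" by (rule sum_mono) (use small TS in blast)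
      also have "\<dots> = card T * m" by simp
      also have "\<dots> \<le> m ^ length ws * m" using cardT by simp
      also have "\<dots> = m ^ length (v # ws)" by simp
      finally show ?thesis using S(3) by simp
    qed
  qed
qed


lemma sf_of_nat: "subfield_of_complex K \<Longrightarrow> of_nat n \<in> K"
  unfolding subfield_of_complex_def by (induction n) auto

lemma sf_of_int: assumes K: "subfield_of_complex K" shows "of_int k \<in> K"
proof (cases "k \<ge> 0")
  case True
  then have "(of_int k :: complex) = of_nat (nat k)" by simp
  then show ?thesis using sf_of_nat[OF K] by metis
next
  case False
  then have "(of_int k :: complex) = 0 - of_nat (nat (- k))" by simp
  then show ?thesis using sf_of_nat[OF K] K unfolding subfield_of_complex_def by metis
qed

lemma ok_int: "subfield_of_complex K \<Longrightarrow> of_int k \<in> ring_of_integers K"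
  unfolding ring_of_integers_def using sf_of_int alg_int_of_int by blast

lemma ok_mult: "subfield_of_complex K \<Longrightarrow> x \<in> ring_of_integers K \<Longrightarrow> y \<in> ring_of_integers K \<Longrightarrow> x * y \<in> ring_of_integers K"
  unfolding ring_of_integers_def subfield_of_complex_def using alg_int_add_mult(2) by blast

lemma ok_diff: "subfield_of_complex K \<Longrightarrow> x \<in> ring_of_integers K \<Longrightarrow> y \<in> ring_of_integers K \<Longrightarrow> x - y \<in> ring_of_integers K"
  unfolding ring_of_integers_def subfield_of_complex_def using alg_int_diff by blast

lemma ok_subgrp: "subfield_of_complex K \<Longrightarrow> subgrp (ring_of_integers K)"
  unfolding subgrp_def using ok_diff ok_int[of K 0] by auto

lemma ideal_subgrp:
  assumes K: "subfield_of_complex K" and I: "nonzero_integral_ideal K I"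
  shows "subgrp I"
proof -
  have neg: "- x \<in> I" if "x \<in> I" for x
    using I ok_int[OF K, of "-1"] that unfolding nonzero_integral_ideal_def by force
  show ?thesis unfolding subgrp_def using I neg unfolding nonzero_integral_ideal_def
    by (metis diff_conv_add_uminus)
qed

lemma coset_eq:
  assumes "subgrp I"
  shows "((+) x ` I = (+) y ` I) \<longleftrightarrow> x - y \<in> I"
proof
  assume "(+) x ` I = (+) y ` I"
  then have "x + 0 \<in> (+) y ` I" using subgrp_zero[OF assms] by (metis image_eqI)
  then obtain i where "i \<in> I" "x = y + i" by auto
  then show "x - y \<in> I" by simp
next
  assume d: "x - y \<in> I"
  show "(+) x ` I = (+) y ` I"
  proof (rule equalityI; rule subsetI)
    fix z assume "z \<in> (+) x ` I"
    then obtain i where i: "i \<in> I" "z = x + i" by auto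
    then have "(x - y) + i \<in> I" using subgrp_add[OF assms d] by blast
    then show "z \<in> (+) y ` I" using i by (intro image_eqI[of _ _ "(x - y) + i"]) auto
  next
    fix z assume "z \<in> (+) y ` I"
    then obtain i where i: "i \<in> I" "z = y + i" by auto
    then have "i - (x - y) \<in> I" using subgrp_diff[OF assms _ d] by blast
    then show "z \<in> (+) x ` I" using i by (intro image_eqI[of _ _ "i - (x - y)"]) auto
  qed
qed

lemma ideal_has_int:
  assumes K: "subfield_of_complex K" and I: "nonzero_integral_ideal K I"
  shows "\<exists>m::nat. m > 0 \<and> of_nat m \<in> I"
proof -
  have G: "subgrp I" by (rule ideal_subgrp[OF K I])
  have IO: "I \<subseteq> ring_of_integers K" and mul: "\<And>r x. r \<in> ring_of_integers K \<Longrightarrow> x \<in> I \<Longrightarrow> r * x \<in> I"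
    using I unfolding nonzero_integral_ideal_def by blast+
  obtain a where a: "a \<in> I" "a \<noteq> 0" using I unfolding nonzero_integral_ideal_def by blast
  then have aO: "a \<in> ring_of_integers K" using IO by blast
  then obtain p :: "int poly" where p: "lead_coeff p = 1" "poly (map_poly of_int p) a = 0"
    unfolding ring_of_integers_def algebraic_integer_def by blast
  have "p \<noteq> 0" using p(1) by auto
  define n :: nat where "n = order 0 p"
  have "monom 1 n dvd p" by (simp add: monom_1_dvd_iff \<open>p \<noteq> 0\<close> n_def)
  then obtain q where q: "p = monom 1 n * q" by (erule dvdE)
  have mq: "map_poly of_int (monom 1 n * q) = monom (1 :: complex) n * map_poly of_int q"
    by (rule poly_eqI) (simp add: coeff_map_poly coeff_monom_mult)
  from p have q0: "q \<noteq> 0" and qa: "poly (map_poly of_int q) a = 0" by (auto simp: q mq poly_monom a(2))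
  from q0 \<open>p \<noteq> 0\<close> have "order 0 p = n + order 0 q" by (simp add: q order_mult)
  hence "order 0 q = 0" by (simp add: n_def)
  with \<open>q \<noteq> 0\<close> have "poly q 0 \<noteq> 0" by (simp add: order_root)
  then have c0: "coeff q 0 \<noteq> 0" by (simp add: poly_0_coeff_0)
  have pw: "a ^ Suc i \<in> I" for i
    by (induction i) (use a aO mul in auto)
  define d where "d = degree q"
  have cm: "coeff (map_poly (of_int :: int \<Rightarrow> complex) q) i = of_int (coeff q i)" for i
    by (simp add: coeff_map_poly)
  have dm: "degree (map_poly (of_int :: int \<Rightarrow> complex) q) = d"
    unfolding d_def by (simp add: degree_map_poly)
  have "0 = (\<Sum>i\<le>d. of_int (coeff q i) * a ^ i)"
    using qa unfolding poly_altdef dm cm by simp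
  also have "\<dots> = of_int (coeff q 0) + (\<Sum>i<d. of_int (coeff q (Suc i)) * a ^ Suc i)"
    by (simp add: sum.atMost_shift)
  finally have ceq: "of_int (coeff q 0) = - (\<Sum>i<d. of_int (coeff q (Suc i)) * a ^ Suc i)"
    by (simp add: eq_neg_iff_add_eq_0)
  have "(\<Sum>i<d. of_int (coeff q (Suc i)) * a ^ Suc i) \<in> I"
  proof (rule subgrp_sum)
    show "subgrp I" by (rule G)
  next
    fix i show "of_int (coeff q (Suc i)) * a ^ Suc i \<in> I" by (rule mul[OF ok_int[OF K] pw])
  qed simp
  then have cI: "of_int (coeff q 0) \<in> I" unfolding ceq by (rule subgrp_neg[OF G])
  define m where "m = nat \<bar>coeff q 0\<bar>"
  have "of_nat m \<in> I"
  proof (cases "coeff q 0 \<ge> 0")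
    case True then show ?thesis using cI unfolding m_def by simp
  next
    case False then show ?thesis using subgrp_neg[OF G cI] unfolding m_def by simp
  qed
  moreover have "m > 0" using c0 unfolding m_def by simp
  ultimately show ?thesis by blast
qed


lemma fin_cosets:
  assumes NF: "number_field K" and I: "nonzero_integral_ideal K I"
  shows "finite {(+) x ` I | x. x \<in> ring_of_integers K}"
proof (rule ccontr)
  let ?O = "ring_of_integers K"
  let ?A = "{(+) x ` I | x. x \<in> ?O}"
  assume inf: "infinite ?A"
  have K: "subfield_of_complex K" using NF unfolding number_field_def by blast
  obtain bs where bs: "K \<subseteq> qspan bs" using NF unfolding number_field_def qspan_def by blast
  have OK: "?O \<subseteq> qspan bs" using bs unfolding ring_of_integers_def by blast
  obtain m :: nat where m: "m > 0" "of_nat m \<in> I" using ideal_has_int[OF K I] by blast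
  have G: "subgrp I" by (rule ideal_subgrp[OF K I])
  have mul: "\<And>r x. r \<in> ?O \<Longrightarrow> x \<in> I \<Longrightarrow> r * x \<in> I"
    using I unfolding nonzero_integral_ideal_def by blast
  obtain A' where A': "A' \<subseteq> ?A" "finite A'" "card A' = Suc (m ^ length bs)"
    using infinite_arbitrarily_large[OF inf] by blast
  define rep where "rep C = (SOME x. x \<in> ?O \<and> C = (+) x ` I)" for C
  have rep: "rep C \<in> ?O \<and> C = (+) (rep C) ` I" if "C \<in> ?A" for C
  proof -
    have "\<exists>x. C = (+) x ` I \<and> x \<in> ?O" using that by (simp only: mem_Collect_eq)
    then obtain x where "C = (+) x ` I \<and> x \<in> ?O" ..
    then have "x \<in> ?O \<and> C = (+) x ` I" by (simp only: conj_commute)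
    then show ?thesis unfolding rep_def by (rule someI)
  qed
  have inj: "inj_on rep A'"
  proof (rule inj_onI)
    fix C1 C2 assume C: "C1 \<in> A'" "C2 \<in> A'" "rep C1 = rep C2"
    have "C1 = (+) (rep C1) ` I" "C2 = (+) (rep C2) ` I"
      using rep[OF subsetD[OF A'(1) C(1)]] rep[OF subsetD[OF A'(1) C(2)]] by simp_all
    then show "C1 = C2" using C(3) by simp
  qed
  define S where "S = rep ` A'"
  have cS: "card S > m ^ length bs" unfolding S_def using card_image[OF inj] A'(3) by simp
  have SO: "S \<subseteq> ?O" unfolding S_def using rep A'(1) by blast
  from pigeon[OF m(1) ok_subgrp[OF K] OK _ SO cS] A'(2)
  obtain x y z where xy: "x \<in> S" "y \<in> S" "x \<noteq> y" "z \<in> ?O" "x - y = of_nat m * z"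
    unfolding S_def by blast
  have "z * of_nat m \<in> I" by (rule mul[OF xy(4) m(2)])
  then have "x - y \<in> I" using xy(5) by (simp add: mult.commute)
  then have ceq: "(+) x ` I = (+) y ` I" using coset_eq[OF G] by blast
  obtain C1 C2 where C: "C1 \<in> A'" "C2 \<in> A'" "x = rep C1" "y = rep C2" using xy unfolding S_def by blast
  have "C1 = (+) (rep C1) ` I" "C2 = (+) (rep C2) ` I"
    using rep[OF subsetD[OF A'(1) C(1)]] rep[OF subsetD[OF A'(1) C(2)]] by simp_all
  then have "C1 = C2" using ceq C(3,4) by simp
  then show False using xy C(3,4) by simp
qed

theorem proposition3p2:
  fixes K :: "complex set" and R :: "complex set set"
  assumes "number_field K"
    and "class_group_representatives K R"
    and "\<forall>g\<in>R. \<forall>I. nonzero_integral_ideal K I \<and> same_ideal_class K I g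
            \<longrightarrow> abs_norm K g \<le> abs_norm K I"
  shows "\<forall>g\<in>R. inseverable K g"
proof
  fix g assume gR: "g \<in> R"
  let ?O = "ring_of_integers K"
  have NF: "number_field K" by fact
  have K: "subfield_of_complex K" using NF unfolding number_field_def by blast
  have gI: "nonzero_integral_ideal K g" using assms(2) gR unfolding class_group_representatives_def by blast
  have Gg: "subgrp g" by (rule ideal_subgrp[OF K gI])
  have gO: "g \<subseteq> ?O" and g0: "0 \<in> g" "g \<noteq> {0}"
    and gmul: "\<And>r x. r \<in> ?O \<Longrightarrow> x \<in> g \<Longrightarrow> r * x \<in> g"
    using gI unfolding nonzero_integral_ideal_def by blast+
  have OK: "?O \<subseteq> K" unfolding ring_of_integers_def by blast
  show "inseverable K g" unfolding inseverable_def
  proof (intro conjI ballI impI)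
    show "nonzero_integral_ideal K g" by (rule gI)
    fix \<alpha> assume aO: "\<alpha> \<in> ?O" and sub: "g \<subseteq> principal_ideal K \<alpha>"
    show "principal_ideal K \<alpha> = ?O"
    proof (rule ccontr)
      assume ne: "principal_ideal K \<alpha> \<noteq> ?O"
      have PO: "principal_ideal K \<alpha> \<subseteq> ?O" unfolding principal_ideal_def using ok_mult[OF K aO] by blast
      then obtain y0 where y0: "y0 \<in> ?O" "y0 \<notin> principal_ideal K \<alpha>" using ne by blast
      have a0: "\<alpha> \<noteq> 0"
      proof
        assume "\<alpha> = 0"
        then have "principal_ideal K \<alpha> = {0}" unfolding principal_ideal_def using ok_int[OF K, of 0] by auto
        then show False using sub g0 by blast
      qed
      have aK: "\<alpha> \<in> K" using aO OK by blast
      have iaK: "inverse \<alpha> \<in> K" using K aK a0 unfolding subfield_of_complex_def by blast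
      define J where "J = (*) (inverse \<alpha>) ` g"
      have JO: "J \<subseteq> ?O"
      proof
        fix z assume "z \<in> J"
        then obtain w where w: "w \<in> g" "z = inverse \<alpha> * w" unfolding J_def by blast
        then obtain u where u: "u \<in> ?O" "w = \<alpha> * u" using sub unfolding principal_ideal_def by blast
        have "z = u" using w u a0 by (simp add: mult.assoc[symmetric])
        then show "z \<in> ?O" using u by simp
      qed
      have JI: "nonzero_integral_ideal K J" unfolding nonzero_integral_ideal_def
      proof (intro conjI ballI)
        show "J \<subseteq> ?O" by (rule JO)
        show "0 \<in> J" unfolding J_def using g0 by force
        obtain w where "w \<in> g" "w \<noteq> 0" using g0 by blast
        then have "inverse \<alpha> * w \<in> J" "inverse \<alpha> * w \<noteq> 0" unfolding J_def using a0 by auto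
        then show "J \<noteq> {0}" by blast
        fix x y assume "x \<in> J" "y \<in> J"
        then obtain u v where "u \<in> g" "v \<in> g" "x = inverse \<alpha> * u" "y = inverse \<alpha> * v" unfolding J_def by blast
        then show "x + y \<in> J" unfolding J_def using subgrp_add[OF Gg]
          by (intro image_eqI[of _ _ "u + v"]) (auto simp: distrib_left)
      next
        fix r x assume "r \<in> ?O" "x \<in> J"
        then obtain u where "u \<in> g" "x = inverse \<alpha> * u" unfolding J_def by blast
        then show "r * x \<in> J" unfolding J_def using gmul[OF \<open>r \<in> ?O\<close>]
          by (intro image_eqI[of _ _ "r * u"]) (auto simp: mult.left_commute)
      qed
      have GJ: "subgrp J" by (rule ideal_subgrp[OF K JI])
      have "same_ideal_class K J g" unfolding same_ideal_class_def J_def using iaK a0 by (intro bexI[of _ "inverse \<alpha>"]) auto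
      then have le: "abs_norm K g \<le> abs_norm K J" using assms(3) gR JI by blast
      define AJ where "AJ = {(+) x ` J | x. x \<in> ?O}"
      define Ag where "Ag = {(+) x ` g | x. x \<in> ?O}"
      have finAg: "finite Ag" unfolding Ag_def by (rule fin_cosets[OF NF gI])
      define rep where "rep C = (SOME x. x \<in> ?O \<and> C = (+) x ` J)" for C
      have rep: "rep C \<in> ?O \<and> C = (+) (rep C) ` J" if "C \<in> AJ" for C
      proof -
        have "\<exists>x. C = (+) x ` J \<and> x \<in> ?O" using that unfolding AJ_def by (simp only: mem_Collect_eq)
        then obtain x where "C = (+) x ` J \<and> x \<in> ?O" ..
        then have "x \<in> ?O \<and> C = (+) x ` J" by (simp only: conj_commute)
        then show ?thesis unfolding rep_def by (rule someI)
      qed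
      define h where "h C = (+) (\<alpha> * rep C) ` g" for C
      have inj: "inj_on h AJ"
      proof (rule inj_onI)
        fix C1 C2 assume C: "C1 \<in> AJ" "C2 \<in> AJ" "h C1 = h C2"
        then have "\<alpha> * rep C1 - \<alpha> * rep C2 \<in> g" unfolding h_def using coset_eq[OF Gg] by blast
        then have "inverse \<alpha> * (\<alpha> * rep C1 - \<alpha> * rep C2) \<in> J" unfolding J_def by blast
        moreover have "inverse \<alpha> * (\<alpha> * rep C1 - \<alpha> * rep C2) = rep C1 - rep C2"
          using a0 by (simp add: field_simps)
        ultimately have "rep C1 - rep C2 \<in> J" by simp
        then have "(+) (rep C1) ` J = (+) (rep C2) ` J" using coset_eq[OF GJ] by blast
        moreover have "C1 = (+) (rep C1) ` J" "C2 = (+) (rep C2) ` J" using rep[OF C(1)] rep[OF C(2)] by simp_all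
        ultimately show "C1 = C2" by simp
      qed
      have img: "h ` AJ \<subseteq> Ag - {(+) y0 ` g}"
      proof
        fix D assume "D \<in> h ` AJ"
        then obtain C where C: "C \<in> AJ" "D = h C" by blast
        have rO: "\<alpha> * rep C \<in> ?O" using ok_mult[OF K aO] rep[OF C(1)] by blast
        have "D \<in> Ag" unfolding Ag_def C(2) h_def using rO by blast
        moreover have "D \<noteq> (+) y0 ` g"
        proof
          assume "D = (+) y0 ` g"
          then have "\<alpha> * rep C - y0 \<in> g" unfolding C(2) h_def using coset_eq[OF Gg] by blast
          then obtain u where u: "u \<in> ?O" "\<alpha> * rep C - y0 = \<alpha> * u" using sub unfolding principal_ideal_def by blast
          then have "y0 = \<alpha> * (rep C - u)" by (simp add: algebra_simps)
          moreover have "rep C - u \<in> ?O" using ok_diff[OF K] rep[OF C(1)] u(1) by blast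
          ultimately show False using y0(2) unfolding principal_ideal_def by blast
        qed
        ultimately show "D \<in> Ag - {(+) y0 ` g}" by blast
      qed
      have y0A: "(+) y0 ` g \<in> Ag" unfolding Ag_def using y0 by blast
      have "card AJ = card (h ` AJ)" using card_image[OF inj] by simp
      also have "\<dots> \<le> card (Ag - {(+) y0 ` g})" by (rule card_mono) (use finAg img in auto)
      also have "\<dots> < card Ag" by (rule card_Diff1_less[OF finAg y0A])
      finally have "abs_norm K J < abs_norm K g" unfolding abs_norm_def AJ_def Ag_def .
      then show False using le by simp
    qed
  qed
qed

end
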